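(* Let $N\ge1$ and let $\xi_1<\dots<\xi_{N+1}$ be nodes in $[-1,1]$ with positive weights $w_1,\dots,w_{N+1}$ such that $\sum_i w_if(\xi_i)=\int_{-1}^1f\,d\xi$ for every polynomial $f$ of degree $\le 2N-1$ (e.g. Gauss–Lobatto–Legendre or Gauss–Legendre nodes). Let $\mathcal L_1,\dots,\mathcal L_{N+1}$ be the Lagrange polynomials of degree $N$ with $\mathcal L_j(\xi_i)=\delta_{ij}$. Define $(N+1)\times(N+1)$ matrices $W^N(a)=\mathrm{diag}(w_ja_j)$ for a vector $a=(a_j)$ of nodal values, $Q^N_{ij}=\sum_m w_m\mathcal L_i(\xi_m)\mathcal L_j'(\xi_m)$, and vectors $\boldsymbol e_1=(\mathcal L_j(-1))_j$, $\boldsymbol e_{N+1}=(\mathcal L_j(1))_j$. Partition $[0,L]$ into elements $[x_k,x_{k+1}]$, $k=1,\dots,K$, with $\Delta x_k=x_{k+1}-x_k>0$. On element $k$ let $\rho^k(\xi)=\sum_j\rho^k_j\mathcal L_j(\xi)$, $\mu^k(\xi)=\sum_j\mu^k_j\mathcal L_j(\xi)$ with $\rho^k_j,\mu^k_j>0$ and $\rho^k(\pm1),\mu^k(\pm1)>0$, and set $Z_s^k(\pm1)=\sqrt{\rho^k(\pm1)\mu^k(\pm1)}$. For unknowns $\boldsymbol v^k(t),\boldsymbol\sigma^k(t)\in\mathbb R^{N+1}$ let $v^k(\xi,t)=\sum_jv^k_j(t)\mathcal L_j(\xi)$, $\sigma^k(\xi,t)=\sum_j\sigma^k_j(t)\mathcal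 L_j(\xi)$. Fix $r_0,r_L\in[-1,1]$ and, for each interior interface between elements $k-1$ and $k$ ($2\le k\le K$), $\alpha^k\in[0,\infty]$. Define hat-variables: (i) left boundary of element $1$: $p_0=\frac12(Z_s^1(-1)v^1(-1,t)+\sigma^1(-1,t))$, $\widehat v^1(-1)=\frac{1+r_0}{Z_s^1(-1)}p_0$, $\widehat\sigma^1(-1)=(1-r_0)p_0$; (ii) right boundary of element $K$: $q_L=\frac12(Z_s^K(1)v^K(1,t)-\sigma^K(1,t))$, $\widehat v^K(1)=\frac{1+r_L}{Z_s^K(1)}q_L$, $\widehat\sigma^K(1)=-(1-r_L)q_L$; (iii) interface between elements $k-1$ and $k$: with $Z^-=Z_s^{k-1}(1)$, $Z^+=Z_s^k(-1)$, $q^-=\frac12(Z^-v^{k-1}(1,t)-\sigma^{k-1}(1,t))$, $p^+=\frac12(Z^+v^k(-1,t)+\sigma^k(-1,t))$, $\eta^k=\frac{Z^-Z^+}{Z^-+Z^+}$, $\Phi^k=\eta^k(\frac2{Z^+}p^+-\frac2{Z^-}q^-)$, set $\widehat\sigma^k=\frac{\alpha^k}{\eta^k+\alpha^k}\Phi^k$ ($=\Phi^k$ if $\alpha^k=\infty$), $\widehat\sigma^{k-1}(1)=\widehat\sigma^k(-1)=\widehat\sigma^k$, $\widehat v^{k-1}(1)=\frac{2q^-+\widehat\sigma^k}{Z^-}$, $\widehat v^k(-1)=\frac{2p^+-\widehat\sigma^k}{Z^+}$. Let $F^k(-1,t)=\frac{Z_s^k(-1)}{2}(v^k(-1,t)-\widehat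 v^k(-1))-\frac12(\sigma^k(-1,t)-\widehat\sigma^k(-1))$ and $G^k(1,t)=\frac{Z_s^k(1)}{2}(v^k(1,t)-\widehat v^k(1))+\frac12(\sigma^k(1,t)-\widehat\sigma^k(1))$. Suppose $(\boldsymbol v^k,\boldsymbol\sigma^k)_{k=1}^K$ are differentiable and satisfy, for all $k$, $$\frac{\Delta x_k}{2}W^N(\rho^k)\frac{d\boldsymbol v^k}{dt}=Q^N\boldsymbol\sigma^k-\boldsymbol e_1F^k(-1,t)-\boldsymbol e_{N+1}G^k(1,t),$$ $$\frac{\Delta x_k}{2}W^N(1/\mu^k)\frac{d\boldsymbol\sigma^k}{dt}=Q^N\boldsymbol v^k+\boldsymbol e_1\frac{F^k(-1,t)}{Z_s^k(-1)}-\boldsymbol e_{N+1}\frac{G^k(1,t)}{Z_s^k(1)},$$ where $W^N(\rho^k)=\mathrm{diag}(w_j\rho^k_j)$ and $W^N(1/\mu^k)=\mathrm{diag}(w_j/\mu^k_j)$. Define $\mathcal E(t)=\sum_{k=1}^K\frac{\Delta x_k}{2}\sum_{j=1}^{N+1}\frac{w_j}{2}\big(\rho^k_j|v^k_j|^2+\frac{1}{\mu^k_j}|\sigma^k_j|^2\big)$. Then $$\frac{d\mathcal E}{dt}=-\sum_{k=1}^K\Big(\frac{|F^k(-1,t)|^2}{Z_s^k(-1)}+\frac{|G^k(1,t)|^2}{Z_s^k(1)}\Big)-\sum_{k=2}^K\frac{\alpha^k}{(\eta^k+\alpha^k)^2}|\Phi^k|^2-\frac{1-r_0^2}{Z_s^1(-1)}p_0^2-\frac{1-r_L^2}{Z_s^K(1)}q_L^2,$$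 where the $k$-th friction term is $0$ when $\alpha^k=\infty$. In particular $\frac{d\mathcal E}{dt}\le0$ for every mesh (asymptotic stability).
   Context: This is the nodal discontinuous Galerkin semi-discretization of the 1D elastic wave equation $\rho\partial_tv=\partial_x\sigma$, $\frac1\mu\partial_t\sigma=\partial_xv$ on $[0,L]$, each element mapped to $[-1,1]$ by $x=x_k+\frac{\Delta x_k}{2}(1+\xi)$. Element faces are coupled through frictional interface conditions (force balance plus $\widehat\sigma=\alpha[\![\widehat v]\!]$, $\alpha=\infty$ meaning a locked interface) and the external boundaries through $\frac{Z_s}{2}(1-r)v\mp\frac{1+r}{2}\sigma=0$ with reflection coefficients $r_0$ (at $x=0$) and $r_L$ (at $x=L$). The hat-variables are computed from the polynomial traces at $\xi=\pm1$. *)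

theory Defs
  imports "HOL-Analysis.Analysis" "HOL-Computational_Algebra.Polynomial"
begin

text \<open>Nodes are indexed 0..N (the paper uses 1..N+1); elements are indexed 1..K.
  V, S :: nat => nat => real denote the nodal values v^k_j(t), sigma^k_j(t) at a fixed time.\<close>

definition lagrange :: "(nat \<Rightarrow> real) \<Rightarrow> nat \<Rightarrow> nat \<Rightarrow> real poly" where
  "lagrange \<xi> N j = (\<Prod>m\<in>{0..N} - {j}. smult (inverse (\<xi> j - \<xi> m)) [:- \<xi> m, 1:])"

definition nodal_eval :: "(nat \<Rightarrow> real) \<Rightarrow> nat \<Rightarrow> (nat \<Rightarrow> real) \<Rightarrow> real \<Rightarrow> real" where
  "nodal_eval \<xi> N a s = (\<Sum>j\<le>N. a j * poly (lagrange \<xi> N j) s)"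

definition Qmat :: "(nat \<Rightarrow> real) \<Rightarrow> (nat \<Rightarrow> real) \<Rightarrow> nat \<Rightarrow> nat \<Rightarrow> nat \<Rightarrow> real" where
  "Qmat \<xi> w N i j = (\<Sum>m\<le>N. w m * poly (lagrange \<xi> N i) (\<xi> m)
                         * poly (pderiv (lagrange \<xi> N j)) (\<xi> m))"

definition Zs :: "(nat \<Rightarrow> real) \<Rightarrow> nat \<Rightarrow> (nat \<Rightarrow> nat \<Rightarrow> real) \<Rightarrow> (nat \<Rightarrow> nat \<Rightarrow> real)
                  \<Rightarrow> nat \<Rightarrow> real \<Rightarrow> real" where
  "Zs \<xi> N rho mu k s = sqrt (nodal_eval \<xi> N (rho k) s * nodal_eval \<xi> N (mu k) s)"

definition p0 where
  "p0 \<xi> N rho mu V S = (Zs \<xi> N rho mu 1 (-1) * nodal_eval \<xi> N (V 1) (-1) + nodal_eval \<xi> N (S 1) (-1)) / 2"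

definition qL where
  "qL \<xi> N rho mu K V S = (Zs \<xi> N rho mu K 1 * nodal_eval \<xi> N (V K) 1 - nodal_eval \<xi> N (S K) 1) / 2"

definition qm where
  "qm \<xi> N rho mu V S k = (Zs \<xi> N rho mu (k-1) 1 * nodal_eval \<xi> N (V (k-1)) 1 - nodal_eval \<xi> N (S (k-1)) 1) / 2"

definition pp where
  "pp \<xi> N rho mu V S k = (Zs \<xi> N rho mu k (-1) * nodal_eval \<xi> N (V k) (-1) + nodal_eval \<xi> N (S k) (-1)) / 2"

definition eta where
  "eta \<xi> N rho mu k = Zs \<xi> N rho mu (k-1) 1 * Zs \<xi> N rho mu k (-1)
                      / (Zs \<xi> N rho mu (k-1) 1 + Zs \<xi> N rho mu k (-1))"

definition Phi where
  "Phi \<xi> N rho mu V S k = eta \<xi> N rho mu k *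
     (2 / Zs \<xi> N rho mu k (-1) * pp \<xi> N rho mu V S k - 2 / Zs \<xi> N rho mu (k-1) 1 * qm \<xi> N rho mu V S k)"

text \<open>Interface traction hat-sigma^k; alpha^k = infinity means a locked interface.\<close>
definition sig_hat_if :: "(nat \<Rightarrow> real) \<Rightarrow> nat \<Rightarrow> (nat \<Rightarrow> nat \<Rightarrow> real) \<Rightarrow> (nat \<Rightarrow> nat \<Rightarrow> real)
     \<Rightarrow> (nat \<Rightarrow> ereal) \<Rightarrow> (nat \<Rightarrow> nat \<Rightarrow> real) \<Rightarrow> (nat \<Rightarrow> nat \<Rightarrow> real) \<Rightarrow> nat \<Rightarrow> real" where
  "sig_hat_if \<xi> N rho mu \<alpha> V S k =
     (if \<alpha> k = \<infinity> then Phi \<xi> N rho mu V S k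
      else real_of_ereal (\<alpha> k) / (eta \<xi> N rho mu k + real_of_ereal (\<alpha> k)) * Phi \<xi> N rho mu V S k)"

definition v_hat_left where
  "v_hat_left \<xi> N rho mu \<alpha> r0 V S k =
     (if k = 1 then (1 + r0) / Zs \<xi> N rho mu 1 (-1) * p0 \<xi> N rho mu V S
      else (2 * pp \<xi> N rho mu V S k - sig_hat_if \<xi> N rho mu \<alpha> V S k) / Zs \<xi> N rho mu k (-1))"

definition s_hat_left where
  "s_hat_left \<xi> N rho mu \<alpha> r0 V S k =
     (if k = 1 then (1 - r0) * p0 \<xi> N rho mu V S else sig_hat_if \<xi> N rho mu \<alpha> V S k)"

definition v_hat_right where
  "v_hat_right \<xi> N rho mu \<alpha> K rL V S k =
     (if k = K then (1 + rL) / Zs \<xi> N rho mu K 1 * qL \<xi> N rho mu K V S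
      else (2 * qm \<xi> N rho mu V S (k+1) + sig_hat_if \<xi> N rho mu \<alpha> V S (k+1)) / Zs \<xi> N rho mu k 1)"

definition s_hat_right where
  "s_hat_right \<xi> N rho mu \<alpha> K rL V S k =
     (if k = K then - (1 - rL) * qL \<xi> N rho mu K V S else sig_hat_if \<xi> N rho mu \<alpha> V S (k+1))"

definition Fpen where
  "Fpen \<xi> N rho mu \<alpha> r0 V S k =
     Zs \<xi> N rho mu k (-1) / 2 * (nodal_eval \<xi> N (V k) (-1) - v_hat_left \<xi> N rho mu \<alpha> r0 V S k)
     - (nodal_eval \<xi> N (S k) (-1) - s_hat_left \<xi> N rho mu \<alpha> r0 V S k) / 2"

definition Gpen where
  "Gpen \<xi> N rho mu \<alpha> K rL V S k =
     Zs \<xi> N rho mu k 1 / 2 * (nodal_eval \<xi> N (V k) 1 - v_hat_right \<xi> N rho mu \<alpha> K rL V S k)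
     + (nodal_eval \<xi> N (S k) 1 - s_hat_right \<xi> N rho mu \<alpha> K rL V S k) / 2"

definition fric where
  "fric \<xi> N rho mu \<alpha> V S k =
     (if \<alpha> k = \<infinity> then 0
      else real_of_ereal (\<alpha> k) / (eta \<xi> N rho mu k + real_of_ereal (\<alpha> k))\<^sup>2 * (Phi \<xi> N rho mu V S k)\<^sup>2)"

definition energy where
  "energy w N x K rho mu V S =
     (\<Sum>k=1..K. (x (Suc k) - x k) / 2 * (\<Sum>j\<le>N. w j / 2 *
        (rho k j * (V k j)\<^sup>2 + (S k j)\<^sup>2 / mu k j)))"

end

theory Submission
  imports Defs
begin

lemma pderiv_sum': "finite A \<Longrightarrow> pderiv (sum f A) = sum (\<lambda>i. pderiv (f i)) A"
  by (induct A rule: finite_induct) (auto simp: pderiv_add)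

lemma degree_lagrange: "j \<le> N \<Longrightarrow> degree (lagrange \<xi> N j) \<le> N"
proof -
  assume j: "j \<le> N"
  have "degree (lagrange \<xi> N j) \<le> sum (degree \<circ> (\<lambda>m. smult (inverse (\<xi> j - \<xi> m)) [:- \<xi> m, 1:])) ({0..N} - {j})"
    unfolding lagrange_def by (rule degree_prod_sum_le) simp
  also have "\<dots> \<le> sum (\<lambda>m. 1) ({0..N} - {j})"
    by (rule sum_mono) simp
  also have "\<dots> = N" using j by simp
  finally show ?thesis .
qed

definition Pn :: "(nat \<Rightarrow> real) \<Rightarrow> nat \<Rightarrow> (nat \<Rightarrow> real) \<Rightarrow> real poly" where
  "Pn \<xi> N a = (\<Sum>j\<le>N. smult (a j) (lagrange \<xi> N j))"

lemma poly_Pn: "poly (Pn \<xi> N a) s = nodal_eval \<xi> N a s"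
  by (simp add: Pn_def nodal_eval_def poly_sum)

lemma poly_pderiv_Pn: "poly (pderiv (Pn \<xi> N a)) s = (\<Sum>j\<le>N. a j * poly (pderiv (lagrange \<xi> N j)) s)"
  by (simp add: Pn_def pderiv_sum' poly_sum pderiv_smult)

lemma degree_Pn: "degree (Pn \<xi> N a) \<le> N"
  unfolding Pn_def
  apply (rule degree_sum_le)
   apply simp
  apply (rule order_trans[OF degree_smult_le])
  apply (rule degree_lagrange)
  apply simp
  done

lemma Q_expand:
  "(\<Sum>i\<le>N. a i * (\<Sum>j\<le>N. Qmat \<xi> w N i j * b j))
   = (\<Sum>m\<le>N. w m * poly (Pn \<xi> N a) (\<xi> m) * poly (pderiv (Pn \<xi> N b)) (\<xi> m))"
proof -
  define F where "F i j m = w m * (a i * poly (lagrange \<xi> N i) (\<xi> m)) * (b j * poly (pderiv (lagrange \<xi> N j)) (\<xi> m))" for i j m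
  have 1: "a i * (\<Sum>j\<le>N. Qmat \<xi> w N i j * b j) = (\<Sum>j\<le>N. \<Sum>m\<le>N. F i j m)" for i
    unfolding Qmat_def sum_distrib_left sum_distrib_right F_def
    by (intro sum.cong refl; simp add: mult_ac)
  have 2: "w m * poly (Pn \<xi> N a) (\<xi> m) * poly (pderiv (Pn \<xi> N b)) (\<xi> m) = (\<Sum>j\<le>N. \<Sum>i\<le>N. F i j m)" for m
    unfolding poly_pderiv_Pn poly_Pn nodal_eval_def sum_distrib_left sum_distrib_right F_def
    by (intro sum.cong refl; simp add: mult_ac)
  have "(\<Sum>i\<le>N. \<Sum>j\<le>N. \<Sum>m\<le>N. F i j m) = (\<Sum>i\<le>N. \<Sum>m\<le>N. \<Sum>j\<le>N. F i j m)"
    by (rule sum.cong[OF refl], rule sum.swap)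
  also have "\<dots> = (\<Sum>m\<le>N. \<Sum>i\<le>N. \<Sum>j\<le>N. F i j m)"
    by (rule sum.swap)
  also have "\<dots> = (\<Sum>m\<le>N. \<Sum>j\<le>N. \<Sum>i\<le>N. F i j m)"
    by (rule sum.cong[OF refl], rule sum.swap)
  finally show ?thesis unfolding 1 2 .
qed

lemma quad_ftc:
  assumes quad_exact: "\<forall>f :: real poly. degree f \<le> 2*N - 1 \<longrightarrow>
                        (\<Sum>i\<le>N. w i * poly f (\<xi> i)) = integral {-1..1} (poly f)"
  shows "(\<Sum>i\<le>N. a i * (\<Sum>j\<le>N. Qmat \<xi> w N i j * b j)) + (\<Sum>i\<le>N. b i * (\<Sum>j\<le>N. Qmat \<xi> w N i j * a j))
     = nodal_eval \<xi> N a 1 * nodal_eval \<xi> N b 1 - nodal_eval \<xi> N a (-1) * nodal_eval \<xi> N b (-1)"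
proof -
  define p where "p = Pn \<xi> N a * Pn \<xi> N b"
  have dp: "degree p \<le> 2*N" unfolding p_def
    using degree_mult_le[of "Pn \<xi> N a" "Pn \<xi> N b"] degree_Pn[of \<xi> N a] degree_Pn[of \<xi> N b] by linarith
  have "degree (pderiv p) \<le> 2*N - 1" using dp by (simp add: degree_pderiv)
  hence q: "(\<Sum>i\<le>N. w i * poly (pderiv p) (\<xi> i)) = integral {-1..1} (poly (pderiv p))"
    using quad_exact by blast
  have "(poly (pderiv p) has_integral (poly p 1 - poly p (-1))) {-1..1}"
    by (rule fundamental_theorem_of_calculus) (auto simp: has_real_derivative_iff_has_vector_derivative[symmetric] intro!: DERIV_subset[OF poly_DERIV])
  hence i: "integral {-1..1} (poly (pderiv p)) = poly p 1 - poly p (-1)" by (rule integral_unique)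
  have "(\<Sum>i\<le>N. a i * (\<Sum>j\<le>N. Qmat \<xi> w N i j * b j)) + (\<Sum>i\<le>N. b i * (\<Sum>j\<le>N. Qmat \<xi> w N i j * a j))
     = (\<Sum>i\<le>N. w i * poly (pderiv p) (\<xi> i))"
    unfolding Q_expand sum.distrib[symmetric] p_def pderiv_mult
    by (rule sum.cong) (simp_all add: algebra_simps)
  also have "\<dots> = poly p 1 - poly p (-1)" using q i by simp
  finally show ?thesis by (simp add: p_def poly_Pn)
qed

lemma left_bd:
  fixes Z v y u z :: real
  assumes "Z > 0" "Z * u + z = Z * v + y"
  shows "- v * y - (Z/2 * (v-u) - (y-z)/2) * (v - y/Z) = - ((Z/2 * (v-u) - (y-z)/2)^2 / Z) - u * z"
proof -
  have z: "z = Z * v + y - Z * u" using assms by simp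
  have F: "Z/2 * (v-u) - (y-z)/2 = Z * (v - u)" by (simp add: z field_simps)
  have "v - y/Z = (Z * v - y)/Z" using assms(1) by (simp add: field_simps)
  then show ?thesis unfolding F using assms(1) by (simp add: z field_simps power2_eq_square)
qed
lemma right_bd:
  fixes Z v y u z :: real
  assumes "Z > 0" "Z * u - z = Z * v - y"
  shows "v * y - (Z/2 * (v-u) + (y-z)/2) * (v + y/Z) = - ((Z/2 * (v-u) + (y-z)/2)^2 / Z) + u * z"
proof -
  have z: "z = Z * u - Z * v + y" using assms by simp
  have F: "Z/2 * (v-u) + (y-z)/2 = Z * (v - u)" by (simp add: z field_simps)
  have "v + y/Z = (Z * v + y)/Z" using assms(1) by (simp add: field_simps)
  then show ?thesis unfolding F using assms(1) by (simp add: z field_simps power2_eq_square)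
qed
lemma iface:
  fixes Zm Zp a p q :: real
  assumes "Zm > 0" "Zp > 0" "a \<ge> 0"
  defines "\<eta> \<equiv> Zm*Zp/(Zm+Zp)"
  defines "\<Phi> \<equiv> \<eta> * (2/Zp*p - 2/Zm*q)"
  shows "(a/(\<eta>+a)*\<Phi>) * ((2*q + a/(\<eta>+a)*\<Phi>)/Zm - (2*p - a/(\<eta>+a)*\<Phi>)/Zp) = - (a/(\<eta>+a)^2 * \<Phi>^2)"
    and "\<Phi> * ((2*q + \<Phi>)/Zm - (2*p - \<Phi>)/Zp) = 0"
proof -
  have e: "\<eta> > 0" using assms by (simp add: \<eta>_def)
  have inv: "1/Zm + 1/Zp = 1/\<eta>" using assms(1,2) by (simp add: \<eta>_def field_simps)
  have key: "\<And>s. (2*q + s)/Zm - (2*p - s)/Zp = (s - \<Phi>)/\<eta>"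
  proof -
    fix s
    have "(2*q + s)/Zm - (2*p - s)/Zp = s * (1/Zm + 1/Zp) - (2/Zp*p - 2/Zm*q)" using assms(1,2) by (simp add: field_simps)
    also have "\<dots> = s/\<eta> - \<Phi>/\<eta>" unfolding inv \<Phi>_def using e by simp
    finally show "(2*q + s)/Zm - (2*p - s)/Zp = (s - \<Phi>)/\<eta>" by (simp add: diff_divide_distrib)
  qed
  have "a/(\<eta>+a)*\<Phi> - \<Phi> = - (\<eta>/(\<eta>+a)) * \<Phi>" using e assms(3) by (simp add: field_simps)
  then show "(a/(\<eta>+a)*\<Phi>) * ((2*q + a/(\<eta>+a)*\<Phi>)/Zm - (2*p - a/(\<eta>+a)*\<Phi>)/Zp) = - (a/(\<eta>+a)^2 * \<Phi>^2)"
    unfolding key using e assms(3) by (simp add: power2_eq_square)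
  show "\<Phi> * ((2*q + \<Phi>)/Zm - (2*p - \<Phi>)/Zp) = 0" unfolding key by simp
qed
lemma sum_shift_last:
  fixes f :: "nat \<Rightarrow> real"
  assumes "1 \<le> K"
  shows "(\<Sum>k=1..K. f k) = f K + (\<Sum>k=2..K. f (k-1))"
  using assms
proof (induction K)
  case 0 then show ?case by simp
next
  case (Suc K)
  show ?case
  proof (cases "K = 0")
    case True then show ?thesis by simp
  next
    case False
    then have "(\<Sum>k=1..K. f k) = f K + (\<Sum>k=2..K. f (k-1))" using Suc by simp
    moreover have "(\<Sum>k=2..Suc K. f (k-1)) = (\<Sum>k=2..K. f (k-1)) + f K"
      using False by (simp add: sum.cl_ivl_Suc)
    ultimately show ?thesis using False by (simp add: sum.cl_ivl_Suc)
  qed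
qed

theorem theorem2:
  fixes N K :: nat and \<xi> w x :: "nat \<Rightarrow> real" and Lc r0 rL t :: real
    and rho mu :: "nat \<Rightarrow> nat \<Rightarrow> real" and \<alpha> :: "nat \<Rightarrow> ereal"
    and v \<sigma> :: "nat \<Rightarrow> nat \<Rightarrow> real \<Rightarrow> real" and dv d\<sigma> :: "nat \<Rightarrow> nat \<Rightarrow> real"
  assumes N1: "N \<ge> 1"
    and nodes_mono: "\<forall>i<N. \<xi> i < \<xi> (Suc i)"
    and nodes_range: "\<forall>i\<le>N. -1 \<le> \<xi> i \<and> \<xi> i \<le> 1"
    and weights_pos: "\<forall>i\<le>N. w i > 0"
    and quad_exact: "\<forall>f :: real poly. degree f \<le> 2*N - 1 \<longrightarrow>
                        (\<Sum>i\<le>N. w i * poly f (\<xi> i)) = integral {-1..1} (poly f)"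
    and K1: "K \<ge> 1"
    and mesh0: "x 1 = 0" and meshL: "x (K+1) = Lc"
    and mesh_pos: "\<forall>k\<in>{1..K}. x k < x (Suc k)"
    and rho_pos: "\<forall>k\<in>{1..K}. \<forall>j\<le>N. rho k j > 0"
    and mu_pos: "\<forall>k\<in>{1..K}. \<forall>j\<le>N. mu k j > 0"
    and rho_end: "\<forall>k\<in>{1..K}. nodal_eval \<xi> N (rho k) (-1) > 0 \<and> nodal_eval \<xi> N (rho k) 1 > 0"
    and mu_end: "\<forall>k\<in>{1..K}. nodal_eval \<xi> N (mu k) (-1) > 0 \<and> nodal_eval \<xi> N (mu k) 1 > 0"
    and r0: "-1 \<le> r0 \<and> r0 \<le> 1" and rL: "-1 \<le> rL \<and> rL \<le> 1"
    and alpha_nonneg: "\<forall>k\<in>{2..K}. \<alpha> k \<ge> 0"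
    and v_deriv: "\<forall>k\<in>{1..K}. \<forall>j\<le>N. ((\<lambda>s. v k j s) has_real_derivative dv k j) (at t)"
    and \<sigma>_deriv: "\<forall>k\<in>{1..K}. \<forall>j\<le>N. ((\<lambda>s. \<sigma> k j s) has_real_derivative d\<sigma> k j) (at t)"
    and eq_v: "\<forall>k\<in>{1..K}. \<forall>i\<le>N. (x (Suc k) - x k) / 2 * (w i * rho k i) * dv k i =
                   (\<Sum>j\<le>N. Qmat \<xi> w N i j * \<sigma> k j t)
                   - poly (lagrange \<xi> N i) (-1) * Fpen \<xi> N rho mu \<alpha> r0 (\<lambda>k j. v k j t) (\<lambda>k j. \<sigma> k j t) k
                   - poly (lagrange \<xi> N i) 1 * Gpen \<xi> N rho mu \<alpha> K rL (\<lambda>k j. v k j t) (\<lambda>k j. \<sigma> k j t) k"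
    and eq_\<sigma>: "\<forall>k\<in>{1..K}. \<forall>i\<le>N. (x (Suc k) - x k) / 2 * (w i / mu k i) * d\<sigma> k i =
                   (\<Sum>j\<le>N. Qmat \<xi> w N i j * v k j t)
                   + poly (lagrange \<xi> N i) (-1) * Fpen \<xi> N rho mu \<alpha> r0 (\<lambda>k j. v k j t) (\<lambda>k j. \<sigma> k j t) k
                       / Zs \<xi> N rho mu k (-1)
                   - poly (lagrange \<xi> N i) 1 * Gpen \<xi> N rho mu \<alpha> K rL (\<lambda>k j. v k j t) (\<lambda>k j. \<sigma> k j t) k
                       / Zs \<xi> N rho mu k 1"
  shows "((\<lambda>\<tau>. energy w N x K rho mu (\<lambda>k j. v k j \<tau>) (\<lambda>k j. \<sigma> k j \<tau>)) has_real_derivative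
           (let V = (\<lambda>k j. v k j t); S = (\<lambda>k j. \<sigma> k j t) in
            - (\<Sum>k=1..K. (Fpen \<xi> N rho mu \<alpha> r0 V S k)\<^sup>2 / Zs \<xi> N rho mu k (-1)
                        + (Gpen \<xi> N rho mu \<alpha> K rL V S k)\<^sup>2 / Zs \<xi> N rho mu k 1)
            - (\<Sum>k=2..K. fric \<xi> N rho mu \<alpha> V S k)
            - (1 - r0\<^sup>2) / Zs \<xi> N rho mu 1 (-1) * (p0 \<xi> N rho mu V S)\<^sup>2
            - (1 - rL\<^sup>2) / Zs \<xi> N rho mu K 1 * (qL \<xi> N rho mu K V S)\<^sup>2)) (at t)
       \<and> (let V = (\<lambda>k j. v k j t); S = (\<lambda>k j. \<sigma> k j t) in
            - (\<Sum>k=1..K. (Fpen \<xi> N rho mu \<alpha> r0 V S k)\<^sup>2 / Zs \<xi> N rho mu k (-1)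
                        + (Gpen \<xi> N rho mu \<alpha> K rL V S k)\<^sup>2 / Zs \<xi> N rho mu k 1)
            - (\<Sum>k=2..K. fric \<xi> N rho mu \<alpha> V S k)
            - (1 - r0\<^sup>2) / Zs \<xi> N rho mu 1 (-1) * (p0 \<xi> N rho mu V S)\<^sup>2
            - (1 - rL\<^sup>2) / Zs \<xi> N rho mu K 1 * (qL \<xi> N rho mu K V S)\<^sup>2) \<le> 0"
proof -
  define V where "V = (\<lambda>k j. v k j t)"
  define S where "S = (\<lambda>k j. \<sigma> k j t)"
  define Zl where "Zl k = Zs \<xi> N rho mu k (-1)" for k
  define Zr where "Zr k = Zs \<xi> N rho mu k 1" for k
  define c where "c k = (x (Suc k) - x k) / 2" for k
  define vl where "vl k = v_hat_left \<xi> N rho mu \<alpha> r0 V S k" for k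
  define sl where "sl k = s_hat_left \<xi> N rho mu \<alpha> r0 V S k" for k
  define vr where "vr k = v_hat_right \<xi> N rho mu \<alpha> K rL V S k" for k
  define sr where "sr k = s_hat_right \<xi> N rho mu \<alpha> K rL V S k" for k
  define F where "F k = Fpen \<xi> N rho mu \<alpha> r0 V S k" for k
  define G where "G k = Gpen \<xi> N rho mu \<alpha> K rL V S k" for k
  define nv where "nv k s = nodal_eval \<xi> N (V k) s" for k s
  define ns where "ns k s = nodal_eval \<xi> N (S k) s" for k s
  have Zpos: "Zl k > 0 \<and> Zr k > 0" if "k \<in> {1..K}" for k
    using rho_end mu_end that by (simp add: Zl_def Zr_def Zs_def)
  have Zif: "Zr (k-1) > 0 \<and> Zl k > 0 \<and> eta \<xi> N rho mu k > 0" if "k \<in> {2..K}" for k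
  proof -
    have "k-1 \<in> {1..K}" "k \<in> {1..K}" using that by auto
    then have a: "Zr (k-1) > 0" "Zl k > 0" using Zpos by auto
    then have "eta \<xi> N rho mu k > 0" unfolding eta_def Zl_def[symmetric] Zr_def[symmetric]
      by (intro divide_pos_pos mult_pos_pos add_pos_pos)
    with a show ?thesis by simp
  qed
  define RHS where "RHS = - (\<Sum>k=1..K. (F k)\<^sup>2 / Zl k + (G k)\<^sup>2 / Zr k)
            - (\<Sum>k=2..K. fric \<xi> N rho mu \<alpha> V S k)
            - (1 - r0\<^sup>2) / Zl 1 * (p0 \<xi> N rho mu V S)\<^sup>2
            - (1 - rL\<^sup>2) / Zr K * (qL \<xi> N rho mu K V S)\<^sup>2"
  define D where "D = (\<Sum>k=1..K. c k * (\<Sum>j\<le>N. w j / 2 * (rho k j * (2 * v k j t * dv k j) + 2 * \<sigma> k j t * d\<sigma> k j / mu k j)))"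
  have deriv: "((\<lambda>\<tau>. energy w N x K rho mu (\<lambda>k j. v k j \<tau>) (\<lambda>k j. \<sigma> k j \<tau>)) has_real_derivative D) (at t)"
    unfolding energy_def D_def c_def
  proof (intro DERIV_sum DERIV_cmult)
    fix k j assume k: "k \<in> {1..K}" and j: "j \<in> {..N}"
    have dv: "((\<lambda>s. v k j s) has_real_derivative dv k j) (at t)" using v_deriv k j by simp
    have ds: "((\<lambda>s. \<sigma> k j s) has_real_derivative d\<sigma> k j) (at t)" using \<sigma>_deriv k j by simp
    show "((\<lambda>\<tau>. rho k j * (v k j \<tau>)\<^sup>2 + (\<sigma> k j \<tau>)\<^sup>2 / mu k j) has_real_derivative
           rho k j * (2 * v k j t * dv k j) + 2 * \<sigma> k j t * d\<sigma> k j / mu k j) (at t)"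
    proof -
      have mu: "mu k j \<noteq> 0" using mu_pos k j by (metis atMost_iff less_irrefl)
      show ?thesis
        by (rule derivative_eq_intros dv ds refl | simp add: mu)+
    qed
  qed
  have elem: "c k * (\<Sum>j\<le>N. w j / 2 * (rho k j * (2 * v k j t * dv k j) + 2 * \<sigma> k j t * d\<sigma> k j / mu k j))
      = - (F k)\<^sup>2 / Zl k - (G k)\<^sup>2 / Zr k - vl k * sl k + vr k * sr k" if k: "k \<in> {1..K}" for k
  proof -
    have Zl: "Zl k > 0" and Zr: "Zr k > 0" using Zpos[OF k] by auto
    have ev: "c k * (w i * rho k i) * dv k i = (\<Sum>j\<le>N. Qmat \<xi> w N i j * S k j)
        - poly (lagrange \<xi> N i) (-1) * F k - poly (lagrange \<xi> N i) 1 * G k" if "i \<le> N" for i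
      using eq_v k that by (simp add: c_def V_def S_def F_def G_def)
    have es: "c k * (w i / mu k i) * d\<sigma> k i = (\<Sum>j\<le>N. Qmat \<xi> w N i j * V k j)
        + poly (lagrange \<xi> N i) (-1) * F k / Zl k - poly (lagrange \<xi> N i) 1 * G k / Zr k" if "i \<le> N" for i
      using eq_\<sigma> k that by (simp add: c_def V_def S_def F_def G_def Zl_def Zr_def)
    have "c k * (\<Sum>j\<le>N. w j / 2 * (rho k j * (2 * v k j t * dv k j) + 2 * \<sigma> k j t * d\<sigma> k j / mu k j))
        = (\<Sum>i\<le>N. V k i * (c k * (w i * rho k i) * dv k i)) + (\<Sum>i\<le>N. S k i * (c k * (w i / mu k i) * d\<sigma> k i))"
      unfolding sum_distrib_left sum.distrib[symmetric]
    proof (rule sum.cong[OF refl])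
      fix i assume "i \<in> {..N}"
      then have mu: "mu k i \<noteq> 0" using mu_pos k by (metis atMost_iff less_irrefl)
      show "c k * (w i / 2 * (rho k i * (2 * v k i t * dv k i) + 2 * \<sigma> k i t * d\<sigma> k i / mu k i))
          = V k i * (c k * (w i * rho k i) * dv k i) + S k i * (c k * (w i / mu k i) * d\<sigma> k i)"
        using mu by (simp add: V_def S_def field_simps)
    qed
    also have "\<dots> = (\<Sum>i\<le>N. V k i * ((\<Sum>j\<le>N. Qmat \<xi> w N i j * S k j)
        - poly (lagrange \<xi> N i) (-1) * F k - poly (lagrange \<xi> N i) 1 * G k))
        + (\<Sum>i\<le>N. S k i * ((\<Sum>j\<le>N. Qmat \<xi> w N i j * V k j)
        + poly (lagrange \<xi> N i) (-1) * F k / Zl k - poly (lagrange \<xi> N i) 1 * G k / Zr k))"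
      using ev es by simp
    also have "\<dots> = ((\<Sum>i\<le>N. V k i * (\<Sum>j\<le>N. Qmat \<xi> w N i j * S k j))
                  + (\<Sum>i\<le>N. S k i * (\<Sum>j\<le>N. Qmat \<xi> w N i j * V k j)))
        - nv k (-1) * F k - nv k 1 * G k + ns k (-1) * F k / Zl k - ns k 1 * G k / Zr k"
      unfolding nv_def ns_def nodal_eval_def
      by (simp add: algebra_simps sum.distrib sum_subtractf sum_distrib_left sum_distrib_right sum_divide_distrib)
    also have "(\<Sum>i\<le>N. V k i * (\<Sum>j\<le>N. Qmat \<xi> w N i j * S k j))
                  + (\<Sum>i\<le>N. S k i * (\<Sum>j\<le>N. Qmat \<xi> w N i j * V k j))
        = nv k 1 * ns k 1 - nv k (-1) * ns k (-1)"
      unfolding nv_def ns_def by (rule quad_ftc[OF quad_exact])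
    finally have A: "c k * (\<Sum>j\<le>N. w j / 2 * (rho k j * (2 * v k j t * dv k j) + 2 * \<sigma> k j t * d\<sigma> k j / mu k j))
        = (- nv k (-1) * ns k (-1) - F k * (nv k (-1) - ns k (-1) / Zl k))
          + (nv k 1 * ns k 1 - G k * (nv k 1 + ns k 1 / Zr k))"
      by (simp add: algebra_simps)
    have cl: "Zl k * vl k + sl k = Zl k * nv k (-1) + ns k (-1)"
    proof (cases "k = 1")
      case True
      then show ?thesis using Zl
        by (simp add: vl_def sl_def v_hat_left_def s_hat_left_def p0_def nv_def ns_def Zl_def field_simps)
    next
      case False
      then show ?thesis using Zl
        by (simp add: vl_def sl_def v_hat_left_def s_hat_left_def pp_def nv_def ns_def Zl_def field_simps)
    qed
    have cr: "Zr k * vr k - sr k = Zr k * nv k 1 - ns k 1"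
    proof (cases "k = K")
      case True
      then show ?thesis using Zr
        by (simp add: vr_def sr_def v_hat_right_def s_hat_right_def qL_def nv_def ns_def Zr_def field_simps)
    next
      case False
      then show ?thesis using Zr
        by (simp add: vr_def sr_def v_hat_right_def s_hat_right_def qm_def nv_def ns_def Zr_def field_simps)
    qed
    have Fk: "F k = Zl k / 2 * (nv k (-1) - vl k) - (ns k (-1) - sl k) / 2"
      by (simp add: F_def Fpen_def Zl_def nv_def ns_def vl_def sl_def)
    have Gk: "G k = Zr k / 2 * (nv k 1 - vr k) + (ns k 1 - sr k) / 2"
      by (simp add: G_def Gpen_def Zr_def nv_def ns_def vr_def sr_def)
    have L: "- nv k (-1) * ns k (-1) - F k * (nv k (-1) - ns k (-1) / Zl k) = - ((F k)\<^sup>2 / Zl k) - vl k * sl k"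
      unfolding Fk by (rule left_bd[OF Zl cl])
    have R: "nv k 1 * ns k 1 - G k * (nv k 1 + ns k 1 / Zr k) = - ((G k)\<^sup>2 / Zr k) + vr k * sr k"
      unfolding Gk by (rule right_bd[OF Zr cr])
    show ?thesis using A L R by simp
  qed
  have iface_k: "vr (k-1) * sr (k-1) - vl k * sl k = - fric \<xi> N rho mu \<alpha> V S k" if k: "k \<in> {2..K}" for k
  proof -
    have k1: "k \<noteq> 1" "k - 1 \<noteq> K" "k - 1 + 1 = k" using k by auto
    define sh where "sh = sig_hat_if \<xi> N rho mu \<alpha> V S k"
    define Zm where "Zm = Zs \<xi> N rho mu (k-1) 1"
    define Zp where "Zp = Zs \<xi> N rho mu k (-1)"
    define q where "q = qm \<xi> N rho mu V S k"
    define p where "p = pp \<xi> N rho mu V S k"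
    have Zm: "Zm > 0" and Zp: "Zp > 0" using Zif[OF k] by (auto simp: Zm_def Zp_def Zl_def Zr_def)
    have e: "vr (k-1) * sr (k-1) - vl k * sl k = sh * ((2*q + sh)/Zm - (2*p - sh)/Zp)"
      unfolding vr_def sr_def vl_def sl_def v_hat_right_def s_hat_right_def v_hat_left_def s_hat_left_def
      using k1 by (simp add: sh_def Zm_def Zp_def q_def p_def right_diff_distrib mult_ac)
    have eta: "eta \<xi> N rho mu k = Zm*Zp/(Zm+Zp)" by (simp add: eta_def Zm_def Zp_def)
    have Phi: "Phi \<xi> N rho mu V S k = (Zm*Zp/(Zm+Zp)) * (2/Zp*p - 2/Zm*q)"
      by (simp add: Phi_def eta Zm_def Zp_def p_def q_def)
    show ?thesis
    proof (cases "\<alpha> k = \<infinity>")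
      case True
      then show ?thesis unfolding e sh_def sig_hat_if_def fric_def Phi
        using iface(2)[OF Zm Zp order_refl, of p q] by simp
    next
      case False
      have a: "0 \<le> real_of_ereal (\<alpha> k)" using alpha_nonneg k by (simp add: real_of_ereal_pos)
      show ?thesis using False unfolding e sh_def sig_hat_if_def fric_def Phi eta
        using iface(1)[OF Zm Zp a, of p q] by simp
    qed
  qed
  have DR: "D = RHS"
  proof -
    have "D = (\<Sum>k=1..K. - ((F k)\<^sup>2 / Zl k + (G k)\<^sup>2 / Zr k) + vr k * sr k - vl k * sl k)"
      unfolding D_def
    proof (rule sum.cong[OF refl])
      fix k assume "k \<in> {1..K}"
      from elem[OF this] show "c k * (\<Sum>j\<le>N. w j / 2 * (rho k j * (2 * v k j t * dv k j) + 2 * \<sigma> k j t * d\<sigma> k j / mu k j))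
        = - ((F k)\<^sup>2 / Zl k + (G k)\<^sup>2 / Zr k) + vr k * sr k - vl k * sl k" by linarith
    qed
    also have "\<dots> = - (\<Sum>k=1..K. (F k)\<^sup>2 / Zl k + (G k)\<^sup>2 / Zr k) + (\<Sum>k=1..K. vr k * sr k) - (\<Sum>k=1..K. vl k * sl k)"
      by (simp add: sum.distrib sum_subtractf sum_negf)
    also have "(\<Sum>k=1..K. vr k * sr k) = vr K * sr K + (\<Sum>k=2..K. vr (k-1) * sr (k-1))"
      using sum_shift_last[OF K1, of "\<lambda>k. vr k * sr k"] by simp
    also have "(\<Sum>k=1..K. vl k * sl k) = vl 1 * sl 1 + (\<Sum>k=2..K. vl k * sl k)"
      using K1 by (simp add: sum.atLeast_Suc_atMost numeral_2_eq_2)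
    finally have "D = - (\<Sum>k=1..K. (F k)\<^sup>2 / Zl k + (G k)\<^sup>2 / Zr k) + vr K * sr K - vl 1 * sl 1
        + (\<Sum>k=2..K. vr (k-1) * sr (k-1) - vl k * sl k)"
      by (simp add: sum_subtractf)
    also have "(\<Sum>k=2..K. vr (k-1) * sr (k-1) - vl k * sl k) = - (\<Sum>k=2..K. fric \<xi> N rho mu \<alpha> V S k)"
      unfolding sum_negf[symmetric] by (rule sum.cong[OF refl], rule iface_k)
    also have "vr K * sr K = - ((1 - rL\<^sup>2) / Zr K * (qL \<xi> N rho mu K V S)\<^sup>2)"
      by (simp add: vr_def sr_def v_hat_right_def s_hat_right_def Zr_def power2_eq_square algebra_simps diff_divide_distrib)
    also have "vl 1 * sl 1 = (1 - r0\<^sup>2) / Zl 1 * (p0 \<xi> N rho mu V S)\<^sup>2"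
      by (simp add: vl_def sl_def v_hat_left_def s_hat_left_def Zl_def power2_eq_square algebra_simps)
    finally show ?thesis unfolding RHS_def by simp
  qed
  have nonpos: "RHS \<le> 0"
  proof -
    have K1': "K \<in> {1..K}" "1 \<in> {1..K}" using K1 by auto
    have a: "0 \<le> (\<Sum>k=1..K. (F k)\<^sup>2 / Zl k + (G k)\<^sup>2 / Zr k)"
      by (rule sum_nonneg) (use Zpos in \<open>auto intro!: add_nonneg_nonneg divide_nonneg_pos\<close>)
    have b: "0 \<le> (\<Sum>k=2..K. fric \<xi> N rho mu \<alpha> V S k)"
    proof (rule sum_nonneg)
      fix k assume k: "k \<in> {2..K}"
      have "0 < eta \<xi> N rho mu k" using Zif k by blast
      moreover have "0 \<le> real_of_ereal (\<alpha> k)" using alpha_nonneg k by (simp add: real_of_ereal_pos)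
      ultimately show "0 \<le> fric \<xi> N rho mu \<alpha> V S k" by (simp add: fric_def)
    qed
    have c1: "0 \<le> (1 - r0\<^sup>2) / Zl 1 * (p0 \<xi> N rho mu V S)\<^sup>2"
    proof -
      have "r0\<^sup>2 \<le> 1" using r0 by (auto simp: abs_square_le_1 abs_le_iff)
      then show ?thesis using Zpos[OF K1'(2)] by simp
    qed
    have c2: "0 \<le> (1 - rL\<^sup>2) / Zr K * (qL \<xi> N rho mu K V S)\<^sup>2"
    proof -
      have "rL\<^sup>2 \<le> 1" using rL by (auto simp: abs_square_le_1 abs_le_iff)
      then show ?thesis using Zpos[OF K1'(1)] by simp
    qed
    show ?thesis unfolding RHS_def using a b c1 c2 by linarith
  qed
  show ?thesis
    using deriv DR nonpos unfolding Let_def V_def[symmetric] S_def[symmetric]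
    by (simp add: RHS_def F_def G_def Zl_def Zr_def)
qed

end
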